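(* Let $m\ge 2$, $1\le\ell<m$, and let $\mathcal{R}$ be the positional scoring rule with scoring function $\lambda(i)=\alpha_i$, where $\alpha_1\ge\alpha_2\ge\dots\ge\alpha_m=0$ and $\alpha_1>0$. Then the optimal truncated-ballot algorithm (described in the context) is, for $\ell$-truncated elections, an approximation algorithm for $\mathcal{R}$ with approximation ratio $$\frac{\sum_{i=1}^{\ell}\alpha_i}{m\,\alpha_{\ell+1}+\frac{\alpha_1-\alpha_{\ell+1}}{\alpha_1}\sum_{i=1}^{\ell}\alpha_i};$$ that is, for every election $E$ (with full rankings), if $w$ is the candidate returned by the algorithm on the $\ell$-truncation of $E$, then $\mathrm{sc}_\lambda(w)/\max_{c\in C}\mathrm{sc}_\lambda(c)$ is at least this quantity.
   Context: An election consists of a set $V$ of $n$ voters and a set $C$ of $m$ candidates; each voter $v$ has a strict linear order over $C$, and $\mathrm{pos}_v(c)$ is the position of $c$ (1 = top). The $\lambda$-score is $\mathrm{sc}_\lambda(c)=\sum_{v}\lambda(\mathrm{pos}_v(c))$. The $\ell$-truncation of $E$ reveals, for each voter, only her top $\ell$ candidates in order. Let $\mathrm{occ}(c)$ be the number of voters ranking $c$ among their top $\ell$, and $T(c)=\sum_{v:\,\mathrm{pos}_v(c)\le\ell}\alpha_{\mathrm{pos}_v(c)}$. Define $\mathrm{worst}(c)=T(c)+(n-\mathrm{occ}(c))\alpha_m$ (score when $c$ is placed last by every voter not ranking it in the top $\ell$) and $\mathrm{best}(c)=T(c)+(n-\mathrm{occ}(c))\alpha_{\ell+1}$ (score when $c$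 is placed at position $\ell+1$ by every such voter). Optimal truncated-ballot algorithm: let $a$ be a candidate with highest $\mathrm{worst}$ score, $b_1$ a candidate with highest $\mathrm{best}$ score and $b_2$ a candidate with the highest $\mathrm{best}$ score among $C\setminus\{b_1\}$; return $a$ if $\mathrm{worst}(a)/\mathrm{best}(b_1)\ge\mathrm{worst}(b_1)/\mathrm{best}(b_2)$, and $b_1$ otherwise. *)

theory Defs
  imports Complex_Main
begin

text \<open>An election: finite voter set V, finite candidate set C with card C = m,
  and for each voter v a strict linear order given by its position function
  P v :: candidate => position, a bijection from C onto {1..m} (1 = top).\<close>

definition is_election :: "'v set \<Rightarrow> 'c set \<Rightarrow> nat \<Rightarrow> ('v \<Rightarrow> 'c \<Rightarrow> nat) \<Rightarrow> bool" where
  "is_election V C m P \<longleftrightarrow> finite V \<and> finite C \<and> card C = m \<and>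
     (\<forall>v\<in>V. bij_betw (P v) C {1..m})"

definition sc :: "'v set \<Rightarrow> ('v \<Rightarrow> 'c \<Rightarrow> nat) \<Rightarrow> (nat \<Rightarrow> real) \<Rightarrow> 'c \<Rightarrow> real" where
  "sc V P \<alpha> c = (\<Sum>v\<in>V. \<alpha> (P v c))"

text \<open>Quantities visible in the l-truncation.\<close>
definition occ :: "'v set \<Rightarrow> ('v \<Rightarrow> 'c \<Rightarrow> nat) \<Rightarrow> nat \<Rightarrow> 'c \<Rightarrow> nat" where
  "occ V P l c = card {v\<in>V. P v c \<le> l}"

definition Tsc :: "'v set \<Rightarrow> ('v \<Rightarrow> 'c \<Rightarrow> nat) \<Rightarrow> (nat \<Rightarrow> real) \<Rightarrow> nat \<Rightarrow> 'c \<Rightarrow> real" where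
  "Tsc V P \<alpha> l c = (\<Sum>v\<in>{v\<in>V. P v c \<le> l}. \<alpha> (P v c))"

definition worst :: "'v set \<Rightarrow> ('v \<Rightarrow> 'c \<Rightarrow> nat) \<Rightarrow> (nat \<Rightarrow> real) \<Rightarrow> nat \<Rightarrow> nat \<Rightarrow> 'c \<Rightarrow> real" where
  "worst V P \<alpha> m l c = Tsc V P \<alpha> l c + real (card V - occ V P l c) * \<alpha> m"

definition best :: "'v set \<Rightarrow> ('v \<Rightarrow> 'c \<Rightarrow> nat) \<Rightarrow> (nat \<Rightarrow> real) \<Rightarrow> nat \<Rightarrow> 'c \<Rightarrow> real" where
  "best V P \<alpha> l c = Tsc V P \<alpha> l c + real (card V - occ V P l c) * \<alpha> (l + 1)"

text \<open>w is a possible output of the optimal truncated-ballot algorithm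
  (for some admissible tie-breaking in the choice of a, b1, b2).\<close>
definition trunc_alg_output ::
  "'v set \<Rightarrow> 'c set \<Rightarrow> ('v \<Rightarrow> 'c \<Rightarrow> nat) \<Rightarrow> (nat \<Rightarrow> real) \<Rightarrow> nat \<Rightarrow> nat \<Rightarrow> 'c \<Rightarrow> bool" where
  "trunc_alg_output V C P \<alpha> m l w \<longleftrightarrow>
     (\<exists>a b1 b2.
        a \<in> C \<and> (\<forall>c\<in>C. worst V P \<alpha> m l c \<le> worst V P \<alpha> m l a) \<and>
        b1 \<in> C \<and> (\<forall>c\<in>C. best V P \<alpha> l c \<le> best V P \<alpha> l b1) \<and>
        b2 \<in> C - {b1} \<and> (\<forall>c\<in>C - {b1}. best V P \<alpha> l c \<le> best V P \<alpha> l b2) \<and>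
        w = (if worst V P \<alpha> m l a / best V P \<alpha> l b1 \<ge> worst V P \<alpha> m l b1 / best V P \<alpha> l b2
             then a else b1))"

end

theory Submission
  imports Defs
begin

lemma pos_range:
  assumes "is_election V C m P" "v \<in> V" "c \<in> C"
  shows "1 \<le> P v c \<and> P v c \<le> m"
proof -
  have "bij_betw (P v) C {1..m}" using assms unfolding is_election_def by auto
  then have "P v c \<in> {1..m}" using assms(3) bij_betwE by blast
  then show ?thesis by auto
qed

lemma sc_split:
  assumes "is_election V C m P"
  shows "sc V P \<alpha> c = Tsc V P \<alpha> l c + (\<Sum>v\<in>V - {v\<in>V. P v c \<le> l}. \<alpha> (P v c))"
proof -
  have "finite V" using assms unfolding is_election_def by auto
  then show ?thesis unfolding sc_def Tsc_def
    using sum.subset_diff[of "{v\<in>V. P v c \<le> l}" V "\<lambda>v. \<alpha> (P v c)"] by auto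
qed

lemma card_rest:
  assumes "is_election V C m P"
  shows "card (V - {v\<in>V. P v c \<le> l}) = card V - occ V P l c"
    "occ V P l c \<le> card V"
proof -
  have "finite V" using assms unfolding is_election_def by auto
  then show "card (V - {v\<in>V. P v c \<le> l}) = card V - occ V P l c"
    unfolding occ_def by (subst card_Diff_subset) auto
  show "occ V P l c \<le> card V" unfolding occ_def using \<open>finite V\<close>
    by (intro card_mono) auto
qed

lemma Tsc_sum:
  assumes "is_election V C m P" "l < m"
  shows "(\<Sum>c\<in>C. Tsc V P \<alpha> l c) = real (card V) * (\<Sum>i=1..l. \<alpha> i)"
proof -
  have fin: "finite V" "finite C" using assms unfolding is_election_def by auto
  have "(\<Sum>c\<in>C. Tsc V P \<alpha> l c) = (\<Sum>c\<in>C. \<Sum>v\<in>V. (if P v c \<le> l then \<alpha> (P v c) else 0))"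
    unfolding Tsc_def using fin by (simp add: sum.inter_filter)
  also have "\<dots> = (\<Sum>v\<in>V. \<Sum>c\<in>C. (if P v c \<le> l then \<alpha> (P v c) else 0))"
    by (rule sum.swap)
  also have "\<dots> = (\<Sum>v\<in>V. (\<Sum>i=1..l. \<alpha> i))"
  proof (rule sum.cong)
    fix v assume "v \<in> V"
    then have b: "bij_betw (P v) C {1..m}" using assms unfolding is_election_def by auto
    have "(\<Sum>c\<in>C. (if P v c \<le> l then \<alpha> (P v c) else 0))
          = (\<Sum>i\<in>{1..m}. (if i \<le> l then \<alpha> i else 0))"
      using sum.reindex_bij_betw[OF b, of "\<lambda>i. if i \<le> l then \<alpha> i else 0"] by simp
    also have "\<dots> = (\<Sum>i\<in>{i\<in>{1..m}. i \<le> l}. \<alpha> i)"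
      by (rule sum.inter_filter[symmetric]) simp
    also have "{i\<in>{1..m}. i \<le> l} = {1..l}" using assms(2) by auto
    finally show "(\<Sum>c\<in>C. (if P v c \<le> l then \<alpha> (P v c) else 0)) = (\<Sum>i=1..l. \<alpha> i)" .
  qed simp
  finally show ?thesis by simp
qed

theorem theorem4:
  fixes V :: "'v set" and C :: "'c set" and P :: "'v \<Rightarrow> 'c \<Rightarrow> nat"
    and \<alpha> :: "nat \<Rightarrow> real" and m l :: nat and w :: 'c
  assumes "m \<ge> 2" and "1 \<le> l" and "l < m"
    and mono: "\<And>i j. 1 \<le> i \<Longrightarrow> i \<le> j \<Longrightarrow> j \<le> m \<Longrightarrow> \<alpha> j \<le> \<alpha> i"
    and am: "\<alpha> m = 0" and a1: "\<alpha> 1 > 0"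
    and E: "is_election V C m P" and Vne: "V \<noteq> {}"
    and alg: "trunc_alg_output V C P \<alpha> m l w"
  shows "(\<Sum>i=1..l. \<alpha> i) /
           (real m * \<alpha> (l + 1) + (\<alpha> 1 - \<alpha> (l + 1)) / \<alpha> 1 * (\<Sum>i=1..l. \<alpha> i))
         \<le> sc V P \<alpha> w / Max (sc V P \<alpha> ` C)"
proof -
  define S where "S = (\<Sum>i=1..l. \<alpha> i)"
  define A where "A = \<alpha> 1"
  define \<beta> where "\<beta> = \<alpha> (l + 1)"
  define n where "n = real (card V)"
  define T where "T = Tsc V P \<alpha> l"
  have finV: "finite V" and finC: "finite C" and cardC: "card C = m"
    using E unfolding is_election_def by auto
  have Cne: "C \<noteq> {}" using cardC assms(1) by auto
  have nonneg: "\<And>i. 1 \<le> i \<Longrightarrow> i \<le> m \<Longrightarrow> 0 \<le> \<alpha> i" using mono am by force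
  have le1: "\<And>i. 1 \<le> i \<Longrightarrow> i \<le> m \<Longrightarrow> \<alpha> i \<le> A" unfolding A_def using mono by auto
  have b0: "0 \<le> \<beta>" unfolding \<beta>_def using nonneg assms(3) by auto
  have bA: "\<beta> \<le> A" unfolding \<beta>_def A_def using mono assms(3) by auto
  have S1: "A \<le> S" unfolding S_def A_def
  proof -
    have "(\<Sum>i=1..l. \<alpha> i) = \<alpha> 1 + (\<Sum>i=2..l. \<alpha> i)"
      using assms(2) by (simp add: sum.atLeast_Suc_atMost numeral_2_eq_2)
    moreover have "0 \<le> (\<Sum>i=2..l. \<alpha> i)" using nonneg assms(3) by (intro sum_nonneg) auto
    ultimately show "\<alpha> 1 \<le> (\<Sum>i=1..l. \<alpha> i)" by simp
  qed
  have Apos: "0 < A" using a1 A_def by simp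
  have T0: "0 \<le> T c" if "c \<in> C" for c
    unfolding T_def Tsc_def using nonneg pos_range[OF E _ that] by (intro sum_nonneg) auto
  have TA: "T c \<le> real (occ V P l c) * A" if "c \<in> C" for c
    unfolding T_def Tsc_def occ_def using le1 pos_range[OF E _ that]
    by (intro sum_bounded_above) auto
  have rest: "0 \<le> (\<Sum>v\<in>V - {v\<in>V. P v c \<le> l}. \<alpha> (P v c))
     \<and> (\<Sum>v\<in>V - {v\<in>V. P v c \<le> l}. \<alpha> (P v c)) \<le> real (card V - occ V P l c) * \<beta>"
    if "c \<in> C" for c
  proof
    show "0 \<le> (\<Sum>v\<in>V - {v\<in>V. P v c \<le> l}. \<alpha> (P v c))"
      using nonneg pos_range[OF E _ that] by (intro sum_nonneg) auto
    have "(\<Sum>v\<in>V - {v\<in>V. P v c \<le> l}. \<alpha> (P v c)) \<le> real (card (V - {v\<in>V. P v c \<le> l})) * \<beta>"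
      unfolding \<beta>_def using mono pos_range[OF E _ that] by (intro sum_bounded_above) auto
    then show "(\<Sum>v\<in>V - {v\<in>V. P v c \<le> l}. \<alpha> (P v c)) \<le> real (card V - occ V P l c) * \<beta>"
      using card_rest(1)[OF E] by simp
  qed
  have wT: "worst V P \<alpha> m l c = T c" for c unfolding worst_def T_def am by simp
  have scw: "T c \<le> sc V P \<alpha> c" if "c \<in> C" for c
    using sc_split[OF E, of \<alpha> c l] rest[OF that] T_def by simp
  have scb: "sc V P \<alpha> c \<le> best V P \<alpha> l c" if "c \<in> C" for c
    using sc_split[OF E, of \<alpha> c l] rest[OF that] T_def unfolding best_def \<beta>_def by simp
  have bestT: "best V P \<alpha> l c \<le> n * \<beta> + T c * (A - \<beta>) / A" if "c \<in> C" for c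
  proof -
    have oc: "occ V P l c \<le> card V" using card_rest(2)[OF E] .
    have "best V P \<alpha> l c = T c + (n - real (occ V P l c)) * \<beta>"
      unfolding best_def T_def n_def \<beta>_def using oc by (simp add: of_nat_diff)
    moreover have "T c / A \<le> real (occ V P l c)" using TA[OF that] Apos
      by (simp add: divide_le_eq)
    moreover have "T c * (A - \<beta>) / A = T c - T c / A * \<beta>" using Apos
      by (simp add: field_simps)
    ultimately show ?thesis using b0 mult_right_mono[of "T c / A" "real (occ V P l c)" \<beta>]
      by (simp add: algebra_simps)
  qed
  obtain a b1 b2 where aC: "a \<in> C" and amax: "\<forall>c\<in>C. worst V P \<alpha> m l c \<le> worst V P \<alpha> m l a"
    and b1C: "b1 \<in> C" and b1max: "\<forall>c\<in>C. best V P \<alpha> l c \<le> best V P \<alpha> l b1"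
    and b2C: "b2 \<in> C - {b1}" and b2max: "\<forall>c\<in>C - {b1}. best V P \<alpha> l c \<le> best V P \<alpha> l b2"
    and wdef: "w = (if worst V P \<alpha> m l a / best V P \<alpha> l b1 \<ge> worst V P \<alpha> m l b1 / best V P \<alpha> l b2
             then a else b1)"
    using alg unfolding trunc_alg_output_def by blast
  define M where "M = T a"
  have Mmax: "T c \<le> M" if "c \<in> C" for c using amax that wT M_def by simp
  have "(\<Sum>c\<in>C. T c) \<le> (\<Sum>c\<in>C. M)" using Mmax by (intro sum_mono) auto
  then have nSM: "n * S \<le> real m * M"
    using Tsc_sum[OF E assms(3), of \<alpha>] cardC unfolding T_def n_def S_def by simp
  have M0: "0 \<le> M" using T0[OF aC] M_def by simp
  define OPT where "OPT = Max (sc V P \<alpha> ` C)"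
  obtain oc where oC: "oc \<in> C" and oOPT: "sc V P \<alpha> oc = OPT"
  proof -
    have "Max (sc V P \<alpha> ` C) \<in> sc V P \<alpha> ` C" using finC Cne by (intro Max_in) auto
    then show ?thesis using that unfolding OPT_def by auto
  qed
  have scle: "sc V P \<alpha> c \<le> OPT" if "c \<in> C" for c
    unfolding OPT_def using finC that by (intro Max_ge) auto
  \<comment> \<open>OPT positive: top candidate of some voter\<close>
  obtain v where vV: "v \<in> V" using Vne by auto
  have bv: "bij_betw (P v) C {1..m}" using E vV unfolding is_election_def by auto
  obtain t where tC: "t \<in> C" and tp: "P v t = 1"
    using bij_betw_imp_surj_on[OF bv] assms(1) by (metis atLeastAtMost_iff imageE le_numeral_extra(4) one_le_numeral order.trans)
  have "A \<le> sc V P \<alpha> t"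
  proof -
    have "sc V P \<alpha> t = \<alpha> (P v t) + (\<Sum>u\<in>V - {v}. \<alpha> (P u t))"
      unfolding sc_def using finV vV by (simp add: sum.remove)
    moreover have "0 \<le> (\<Sum>u\<in>V - {v}. \<alpha> (P u t))"
      using nonneg pos_range[OF E _ tC] by (intro sum_nonneg) auto
    ultimately show ?thesis using tp A_def by simp
  qed
  then have OPTpos: "0 < OPT" using scle[OF tC] Apos by simp
  have OPTb1: "OPT \<le> best V P \<alpha> l b1" using oOPT scb[OF oC] b1max oC by force
  have bpos: "0 < best V P \<alpha> l b1" using OPTpos OPTb1 by simp
  have bb1: "best V P \<alpha> l b1 \<le> n * \<beta> + M * (A - \<beta>) / A"
    using bestT[OF b1C] Mmax[OF b1C] bA Apos
      mult_right_mono[of "T b1" M "(A - \<beta>) / A"] by (simp add: divide_nonneg_pos)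
  define D where "D = real m * \<beta> + (A - \<beta>) / A * S"
  have Dpos: "0 < D"
  proof (cases "\<beta> = 0")
    case True then show ?thesis using D_def S1 Apos by simp
  next
    case False then have "0 < real m * \<beta>" using b0 assms(1) by simp
    moreover have "0 \<le> (A - \<beta>) / A * S" using bA Apos S1 by simp
    ultimately show ?thesis unfolding D_def by linarith
  qed
  have key: "S / D \<le> M / best V P \<alpha> l b1"
  proof -
    have "S * (n * \<beta> + M * (A - \<beta>) / A) \<le> M * D"
    proof -
      have "S * n * \<beta> \<le> M * real m * \<beta>" using nSM b0
        by (metis mult.commute mult_right_mono)
      then show ?thesis unfolding D_def using Apos by (simp add: field_simps)
    qed
    moreover have "S * best V P \<alpha> l b1 \<le> S * (n * \<beta> + M * (A - \<beta>) / A)"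
      using bb1 S1 Apos by (intro mult_left_mono) auto
    ultimately have "S * best V P \<alpha> l b1 \<le> M * D" by linarith
    then show ?thesis using Dpos bpos by (simp add: divide_simps)
  qed
  have r1le: "M / best V P \<alpha> l b1 \<le> 1"
    using scw[OF aC] scle[OF aC] OPTb1 bpos M_def by simp
  have goal: "S / D \<le> sc V P \<alpha> w / OPT"
  proof (cases "worst V P \<alpha> m l a / best V P \<alpha> l b1 \<ge> worst V P \<alpha> m l b1 / best V P \<alpha> l b2")
    case True
    then have "w = a" using wdef by simp
    have "M / best V P \<alpha> l b1 \<le> M / OPT" using OPTpos OPTb1 M0
      by (intro divide_left_mono) auto
    also have "\<dots> \<le> sc V P \<alpha> a / OPT" using scw[OF aC] M_def OPTpos
      by (intro divide_right_mono) auto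
    finally show ?thesis using key \<open>w = a\<close> by simp
  next
    case False
    then have wb: "w = b1" using wdef by simp
    have lt: "M / best V P \<alpha> l b1 < T b1 / best V P \<alpha> l b2"
      using False wT M_def by simp
    show ?thesis
    proof (cases "oc = b1")
      case True
      then have "sc V P \<alpha> w / OPT = 1" using wb oOPT OPTpos by simp
      then show ?thesis using key r1le by simp
    next
      case False
      then have ob2: "OPT \<le> best V P \<alpha> l b2" using oOPT scb[OF oC] b2max oC by force
      then have b2pos: "0 < best V P \<alpha> l b2" using OPTpos by simp
      have "T b1 / best V P \<alpha> l b2 \<le> T b1 / OPT" using OPTpos ob2 T0[OF b1C]
        by (intro divide_left_mono) auto
      also have "\<dots> \<le> sc V P \<alpha> b1 / OPT" using scw[OF b1C] OPTpos
        by (intro divide_right_mono) auto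
      finally show ?thesis using key lt wb by simp
    qed
  qed
  then show ?thesis unfolding S_def D_def \<beta>_def A_def OPT_def .
qed

end
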